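(* For every $d\ge 3$, $\mu_t(\mathit{CCC}_d)=0$; that is, the only total mutual-visibility set of $\mathit{CCC}_d$ is the empty set.
   Context: Binary strings $x=x_0\cdots x_{d-1}$ have positions $0,\dots,d-1$ from the left; $x(i)$ is $x$ with bit $i$ complemented. $\mathit{CCC}_d$ ($d\ge 3$) has vertex set $\{[\ell,x]:\ell\in\{0,\dots,d-1\},\ x\in\{0,1\}^d\}$; $[\ell,x]$ and $[\ell',x']$ are adjacent iff either $x=x'$ and $\ell'\equiv\ell\pm1\pmod d$, or $\ell=\ell'$ and $x'=x(\ell)$. For a connected graph $G$ and $X\subseteq V(G)$, two vertices $x,y$ are $X$-visible if some shortest $x,y$-path has no internal vertex in $X$. $X$ is a total mutual-visibility set if every two vertices of $V(G)$ are $X$-visible; $\mu_t(G)$ is the maximum size of a total mutual-visibility set. *)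

theory Defs
  imports Main
begin

(* A graph is given by a vertex set V and an adjacency relation adj (assumed symmetric). *)

definition is_walk :: "'a set \<Rightarrow> ('a \<Rightarrow> 'a \<Rightarrow> bool) \<Rightarrow> 'a list \<Rightarrow> 'a \<Rightarrow> 'a \<Rightarrow> bool" where
  "is_walk V adj p x y \<longleftrightarrow> p \<noteq> [] \<and> hd p = x \<and> last p = y \<and> set p \<subseteq> V \<and>
     (\<forall>i. Suc i < length p \<longrightarrow> adj (p ! i) (p ! Suc i))"

definition gdist :: "'a set \<Rightarrow> ('a \<Rightarrow> 'a \<Rightarrow> bool) \<Rightarrow> 'a \<Rightarrow> 'a \<Rightarrow> nat" where
  "gdist V adj x y = (LEAST n. \<exists>p. is_walk V adj p x y \<and> length p = Suc n)"

definition is_shortest_path :: "'a set \<Rightarrow> ('a \<Rightarrow> 'a \<Rightarrow> bool) \<Rightarrow> 'a list \<Rightarrow> 'a \<Rightarrow> 'a \<Rightarrow> bool" where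
  "is_shortest_path V adj p x y \<longleftrightarrow> is_walk V adj p x y \<and> length p = Suc (gdist V adj x y)"

definition internal :: "'a list \<Rightarrow> 'a set" where
  "internal p = set (butlast (tl p))"

definition X_visible :: "'a set \<Rightarrow> ('a \<Rightarrow> 'a \<Rightarrow> bool) \<Rightarrow> 'a set \<Rightarrow> 'a \<Rightarrow> 'a \<Rightarrow> bool" where
  "X_visible V adj X x y \<longleftrightarrow> (\<exists>p. is_shortest_path V adj p x y \<and> internal p \<inter> X = {})"

definition total_mv_set :: "'a set \<Rightarrow> ('a \<Rightarrow> 'a \<Rightarrow> bool) \<Rightarrow> 'a set \<Rightarrow> bool" where
  "total_mv_set V adj X \<longleftrightarrow> X \<subseteq> V \<and> (\<forall>x\<in>V. \<forall>y\<in>V. X_visible V adj X x y)"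

definition mu_t :: "'a set \<Rightarrow> ('a \<Rightarrow> 'a \<Rightarrow> bool) \<Rightarrow> nat" where
  "mu_t V adj = Max {card X | X. total_mv_set V adj X}"

(* Cube-connected cycles CCC_d: vertices [l, x] with l < d and x a binary string of length d
   (positions 0..d-1 from the left). *)
definition CCC_V :: "nat \<Rightarrow> (nat \<times> bool list) set" where
  "CCC_V d = {(l, x). l < d \<and> length x = d}"

definition CCC_adj :: "nat \<Rightarrow> nat \<times> bool list \<Rightarrow> nat \<times> bool list \<Rightarrow> bool" where
  "CCC_adj d v w \<longleftrightarrow> (case v of (l, x) \<Rightarrow> case w of (l', x') \<Rightarrow>
     (x = x' \<and> (l' = (l + 1) mod d \<or> l = (l' + 1) mod d)) \<or>
     (l = l' \<and> x' = x[l := \<not> x ! l]))"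

end

theory Submission
  imports Defs
begin

lemma suc_mod_ne: "l < d \<Longrightarrow> 3 \<le> d \<Longrightarrow> Suc l mod d \<noteq> l"
proof (cases "Suc l < d")
  case False
  assume "l < d" "3 \<le> d"
  then have "Suc l = d" using False by simp
  then show ?thesis using \<open>3 \<le> d\<close> by auto
qed auto

lemma walk_snoc:
  assumes "is_walk V adj p a b" "adj b c" "c \<in> V"
  shows "is_walk V adj (p @ [c]) a c"
proof -
  have ne: "p \<noteq> []" and h: "hd p = a" and l: "last p = b" and s: "set p \<subseteq> V"
    and ad: "\<forall>i. Suc i < length p \<longrightarrow> adj (p ! i) (p ! Suc i)"
    using assms(1) unfolding is_walk_def by auto
  have "\<forall>i. Suc i < length (p @ [c]) \<longrightarrow> adj ((p @ [c]) ! i) ((p @ [c]) ! Suc i)"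
  proof (intro allI impI)
    fix i assume i: "Suc i < length (p @ [c])"
    show "adj ((p @ [c]) ! i) ((p @ [c]) ! Suc i)"
    proof (cases "Suc i < length p")
      case True then show ?thesis using ad by (simp add: nth_append)
    next
      case False
      then have e: "Suc i = length p" using i by simp
      then have "p ! i = b" using l ne by (metis diff_Suc_1 last_conv_nth)
      then show ?thesis using e assms(2) by (simp add: nth_append)
    qed
  qed
  then show ?thesis using ne h s assms(3) unfolding is_walk_def by auto
qed

lemma rt_walk:
  assumes "(\<lambda>a b. adj a b \<and> a \<in> V \<and> b \<in> V)\<^sup>*\<^sup>* a b" "a \<in> V"
  shows "\<exists>p. is_walk V adj p a b"
  using assms(1)
proof (induction rule: rtranclp_induct)
  case base
  have "is_walk V adj [a] a a" using assms(2) unfolding is_walk_def by auto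
  then show ?case by blast
next
  case (step b c)
  obtain p where p: "is_walk V adj p a b" using step.IH by blast
  have "is_walk V adj (p @ [c]) a c" using walk_snoc[OF p] step(2) by simp
  then show ?case by (rule exI)
qed

context
  fixes d :: nat
  assumes d3: "d \<ge> 3"
begin

abbreviation "R \<equiv> (\<lambda>a b. CCC_adj d a b \<and> a \<in> CCC_V d \<and> b \<in> CCC_V d)"

lemma up: "length x = d \<Longrightarrow> l < d \<Longrightarrow> R\<^sup>*\<^sup>* (l, x) ((l + k) mod d, x)"
proof (induction k)
  case 0 then show ?case by simp
next
  case (Suc k)
  have "R ((l + k) mod d, x) ((l + Suc k) mod d, x)"
    using Suc.prems d3 by (auto simp: CCC_adj_def CCC_V_def mod_Suc_eq)
  with Suc.IH[OF Suc.prems] show ?case by (rule rtranclp.rtrancl_into_rtrancl)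
qed

lemma lev: "length x = d \<Longrightarrow> l < d \<Longrightarrow> l' < d \<Longrightarrow> R\<^sup>*\<^sup>* (l, x) (l', x)"
proof -
  assume a: "length x = d" "l < d" "l' < d"
  have "(l + (l' + d - l)) mod d = l'" using a by simp
  then show ?thesis using up[OF a(1,2), of "l' + d - l"] by simp
qed

lemma setbit: assumes a: "length x = d" "l < d" shows "R\<^sup>*\<^sup>* (l, x) (l, x[l := b])"
proof (cases "x ! l = b")
  case True
  then have "x[l := b] = x" using list_update_id[of x l] by simp
  then show ?thesis by simp
next
  case False
  have "x[l := b] = x[l := \<not> x ! l]" using False by auto
  moreover have "R (l, x) (l, x[l := \<not> x ! l])"
    using a by (auto simp: CCC_adj_def CCC_V_def)
  ultimately show ?thesis by auto
qed

lemma strs: "length x = d \<Longrightarrow> length y = d \<Longrightarrow> k \<le> d \<Longrightarrow>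
   R\<^sup>*\<^sup>* (0, x) (0, take k y @ drop k x)"
proof (induction k)
  case 0 then show ?case by simp
next
  case (Suc k)
  define z where "z = take k y @ drop k x"
  have lz: "length z = d" using Suc.prems unfolding z_def by simp
  have kd: "k < d" using Suc.prems by simp
  have eq: "z[k := y ! k] = take (Suc k) y @ drop (Suc k) x"
    using Suc.prems kd unfolding z_def
    by (simp add: take_Suc_conv_app_nth Cons_nth_drop_Suc[symmetric] list_update_append)
  have "R\<^sup>*\<^sup>* (0, x) (0, z)" using Suc unfolding z_def by simp
  also have "R\<^sup>*\<^sup>* (0, z) (k, z)" using lev lz kd d3 by simp
  also have "R\<^sup>*\<^sup>* (k, z) (k, z[k := y ! k])" using setbit lz kd by simp
  also have "R\<^sup>*\<^sup>* (k, z[k := y ! k]) (0, z[k := y ! k])" using lev lz kd d3 by simp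
  finally show ?case using eq by simp
qed

lemma conn: "a \<in> CCC_V d \<Longrightarrow> b \<in> CCC_V d \<Longrightarrow> R\<^sup>*\<^sup>* a b"
proof -
  assume a: "a \<in> CCC_V d" "b \<in> CCC_V d"
  obtain l x where la: "a = (l, x)" "l < d" "length x = d" using a by (auto simp: CCC_V_def)
  obtain l' y where lb: "b = (l', y)" "l' < d" "length y = d" using a by (auto simp: CCC_V_def)
  have "R\<^sup>*\<^sup>* (l, x) (0, x)" using lev la d3 by simp
  also have "R\<^sup>*\<^sup>* (0, x) (0, y)" using strs[OF la(3) lb(3), of d] lb la by simp
  also have "R\<^sup>*\<^sup>* (0, y) (l', y)" using lev lb d3 by simp
  finally show ?thesis using la lb by simp
qed

lemma empty_tmv: "total_mv_set (CCC_V d) (CCC_adj d) {}"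
  unfolding total_mv_set_def
proof (intro conjI ballI)
  fix a b assume ab: "a \<in> CCC_V d" "b \<in> CCC_V d"
  obtain p where p: "is_walk (CCC_V d) (CCC_adj d) p a b" using rt_walk[OF conn[OF ab] ab(1)] by (elim exE)
  then have "is_walk (CCC_V d) (CCC_adj d) p a b \<and> length p = Suc (length p - 1)"
    unfolding is_walk_def by auto
  then have "\<exists>n p. is_walk (CCC_V d) (CCC_adj d) p a b \<and> length p = Suc n" by blast
  then have "\<exists>p. is_walk (CCC_V d) (CCC_adj d) p a b \<and> length p = Suc (gdist (CCC_V d) (CCC_adj d) a b)"
    unfolding gdist_def by (rule LeastI_ex)
  then show "X_visible (CCC_V d) (CCC_adj d) {} a b"
    unfolding X_visible_def is_shortest_path_def by auto
qed (simp)

lemma not_vis: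
  assumes "(l, x) \<in> CCC_V d" "(l, x) \<in> X"
  shows "\<not> X_visible (CCC_V d) (CCC_adj d) X (l, x[l := \<not> x ! l]) (Suc l mod d, x)"
proof
  let ?u = "(l, x[l := \<not> x ! l])" and ?w = "(Suc l mod d, x)"
  assume "X_visible (CCC_V d) (CCC_adj d) X ?u ?w"
  then obtain p where p: "is_shortest_path (CCC_V d) (CCC_adj d) p ?u ?w" "internal p \<inter> X = {}"
    unfolding X_visible_def by blast
  have lx: "l < d" "length x = d" using assms by (auto simp: CCC_V_def)
  have ne: "Suc l mod d \<noteq> l" using suc_mod_ne lx d3 by simp
  have neq: "x[l := \<not> x ! l] \<noteq> x" using lx d3
    by (metis list_update_same_conv nth_list_update_eq)
  have "is_walk (CCC_V d) (CCC_adj d) [?u, (l, x), ?w] ?u ?w"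
    unfolding is_walk_def using lx d3
    by (auto simp: CCC_V_def CCC_adj_def less_Suc_eq nth_Cons' mod_Suc_eq)
  moreover have "\<forall>n. (\<exists>q. is_walk (CCC_V d) (CCC_adj d) q ?u ?w \<and> length q = Suc n) \<longrightarrow> 2 \<le> n"
  proof (intro allI impI)
    fix n assume "\<exists>q. is_walk (CCC_V d) (CCC_adj d) q ?u ?w \<and> length q = Suc n"
    then obtain q where q: "is_walk (CCC_V d) (CCC_adj d) q ?u ?w" "length q = Suc n" by blast
    show "2 \<le> n"
    proof (rule ccontr)
      assume "\<not> 2 \<le> n"
      then have "n = 0 \<or> n = 1" by auto
      then show False
      proof
        assume "n = 0"
        then obtain a where "q = [a]" using q(2) by (cases q) auto
        then show False using q(1) ne unfolding is_walk_def by auto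
      next
        assume "n = 1"
        then obtain a b where "q = [a, b]" using q(2)
          by (cases q; cases "tl q") auto
        then have "CCC_adj d ?u ?w" using q(1) unfolding is_walk_def by auto
        then show False using ne neq unfolding CCC_adj_def
          by (auto simp: mod_Suc_eq)
      qed
    qed
  qed
  ultimately have g: "gdist (CCC_V d) (CCC_adj d) ?u ?w = 2"
    unfolding gdist_def by (intro Least_equality) auto
  then have lp: "length p = 3" using p(1) unfolding is_shortest_path_def by simp
  then obtain a b c where pe: "p = [a, b, c]"
    by (cases p; cases "tl p"; cases "tl (tl p)") auto
  have w: "a = ?u" "c = ?w" "b \<in> CCC_V d" "CCC_adj d ?u b" "CCC_adj d b ?w"
    using p(1) unfolding is_shortest_path_def is_walk_def pe
    by (auto simp: nth_Cons')
  obtain l2 z where b: "b = (l2, z)" by (cases b)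
  have "b = (l, x)"
  proof (cases "l2 = l \<and> z = (x[l := \<not> x ! l])[l := \<not> (x[l := \<not> x ! l]) ! l]")
    case True
    then show ?thesis using b lx by simp
  next
    case False
    then have z: "z = x[l := \<not> x ! l]" using w(4) b unfolding CCC_adj_def by auto
    then have zx: "z \<noteq> x" using neq by simp
    then have "l2 = Suc l mod d \<and> x = z[l2 := \<not> z ! l2]" using w(5) b unfolding CCC_adj_def by auto
    then have "x ! l = z ! l" using ne by simp
    then show ?thesis using z lx by simp
  qed
  then have "internal p = {(l, x)}" unfolding internal_def pe by simp
  then show False using p(2) assms(2) by auto
qed

lemma tmv_iff: "total_mv_set (CCC_V d) (CCC_adj d) X \<longleftrightarrow> X = {}"
proof
  assume t: "total_mv_set (CCC_V d) (CCC_adj d) X"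
  show "X = {}"
  proof (rule ccontr)
    assume "X \<noteq> {}"
    then obtain v where v: "v \<in> X" by blast
    then have vV: "v \<in> CCC_V d" using t unfolding total_mv_set_def by auto
    obtain l x where lx: "v = (l, x)" by (cases v)
    have l: "l < d" "length x = d" using vV lx by (auto simp: CCC_V_def)
    have "(l, x[l := \<not> x ! l]) \<in> CCC_V d" "(Suc l mod d, x) \<in> CCC_V d"
      using l d3 by (auto simp: CCC_V_def)
    then have "X_visible (CCC_V d) (CCC_adj d) X (l, x[l := \<not> x ! l]) (Suc l mod d, x)"
      using t unfolding total_mv_set_def by blast
    then show False using not_vis vV v lx by blast
  qed
next
  assume "X = {}" then show "total_mv_set (CCC_V d) (CCC_adj d) X" using empty_tmv by simp
qed

end

theorem corollary4p5:
  fixes d :: nat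
  assumes "d \<ge> 3"
  shows "mu_t (CCC_V d) (CCC_adj d) = 0 \<and>
         (\<forall>X. total_mv_set (CCC_V d) (CCC_adj d) X \<longleftrightarrow> X = {})"
proof -
  have "{card X | X. total_mv_set (CCC_V d) (CCC_adj d) X} = {0}"
    using tmv_iff[OF assms] by auto
  then show ?thesis using tmv_iff[OF assms] unfolding mu_t_def by simp
qed

end
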